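(* For every finite graph $G$ with maximum degree $\Delta\ge 1$, $\chi_s(G)\le 2\sqrt{2}\,\Delta^{3/2}+\Delta$.
   Context: A star coloring of a graph is a proper vertex-coloring in which every path on four vertices contains at least three colors (equivalently, any two color classes induce a forest of stars). The star chromatic number $\chi_s(G)$ is the minimum number of colors in a star coloring of $G$. *)

theory Defs
  imports Complex_Main
begin

definition fin_graph :: "'a set \<Rightarrow> ('a \<Rightarrow> 'a \<Rightarrow> bool) \<Rightarrow> bool" where
  "fin_graph V E \<longleftrightarrow> finite V \<and> (\<forall>u v. E u v \<longrightarrow> u \<in> V \<and> v \<in> V)
     \<and> (\<forall>u v. E u v \<longrightarrow> E v u) \<and> (\<forall>v. \<not> E v v)"

definition degree :: "'a set \<Rightarrow> ('a \<Rightarrow> 'a \<Rightarrow> bool) \<Rightarrow> 'a \<Rightarrow> nat" where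
  "degree V E v = card {u \<in> V. E v u}"

definition max_degree :: "'a set \<Rightarrow> ('a \<Rightarrow> 'a \<Rightarrow> bool) \<Rightarrow> nat" where
  "max_degree V E = Max (insert 0 (degree V E ` V))"

definition star_coloring :: "'a set \<Rightarrow> ('a \<Rightarrow> 'a \<Rightarrow> bool) \<Rightarrow> nat \<Rightarrow> ('a \<Rightarrow> nat) \<Rightarrow> bool" where
  "star_coloring V E k c \<longleftrightarrow>
     (\<forall>v\<in>V. c v < k)
     \<and> (\<forall>u v. E u v \<longrightarrow> c u \<noteq> c v)
     \<and> (\<forall>a b d e. distinct [a, b, d, e] \<and> E a b \<and> E b d \<and> E d e
          \<longrightarrow> card {c a, c b, c d, c e} \<ge> 3)"

definition star_chromatic_number :: "'a set \<Rightarrow> ('a \<Rightarrow> 'a \<Rightarrow> bool) \<Rightarrow> nat" where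
  "star_chromatic_number V E = (LEAST k. \<exists>c. star_coloring V E k c)"

end

theory Submission imports Defs "HOL-Library.FuncSet" begin

definition SC :: "('a \<Rightarrow> 'a \<Rightarrow> bool) \<Rightarrow> nat \<Rightarrow> 'a set \<Rightarrow> ('a \<Rightarrow> nat) set" where
"SC E k T = {c \<in> PiE T (\<lambda>_. {..<k}). (\<forall>u\<in>T. \<forall>w\<in>T. E u w \<longrightarrow> c u \<noteq> c w) \<and>
   (\<forall>a\<in>T. \<forall>b\<in>T. \<forall>d\<in>T. \<forall>e\<in>T. distinct [a,b,d,e] \<and> E a b \<and> E b d \<and> E d e \<longrightarrow> \<not> (c a = c d \<and> c b = c e))}"

lemma SC_restrict: "T \<subseteq> S \<Longrightarrow> \<phi> \<in> SC E k S \<Longrightarrow> restrict \<phi> T \<in> SC E k T"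
  unfolding SC_def by (simp add: PiE_iff subset_iff) blast

lemma SC_finite: "finite S \<Longrightarrow> finite (SC E k S)"
  unfolding SC_def by (rule finite_subset[OF _ finite_PiE[of S "\<lambda>_. {..<k}"]]) auto

lemma arith_key:
  fixes s r :: real assumes s: "s \<ge> 1" and r: "r = sqrt 2"
  shows "r*s^3 \<le> (2*r*s^3 + s^2 - 1) - s^2 - 2*(s^2*(s^2-1)^2)/(r*s^3)"
proof -
  have r1: "r \<ge> 1" using r by simp
  have r2: "r*r = 2" using r by simp
  have sp: "s > 0" using s by simp
  have a0: "s \<le> 2*s^2 - 1"
  proof -
    have "s*1 \<le> s*s" using s by (intro mult_left_mono) auto
    thus ?thesis using s unfolding power2_eq_square by linarith
  qed
  have "1*(2*s^2-1) \<le> r*(2*s^2-1)" using r1 a0 s by (intro mult_right_mono) auto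
  hence a: "s \<le> r*(2*s^2-1)" using a0 by simp
  have b: "2*(s^2*(s^2-1)^2)/(r*s^3) = r*(s^2-1)^2/s"
  proof -
    have "2*(s^2*(s^2-1)^2)/(r*s^3) = (r*r)*(s^2*(s^2-1)^2)/(r*s^3)" using r2 by simp
    also have "\<dots> = r*(s^2-1)^2/s" using sp r1 by (simp add: field_simps power2_eq_square power3_eq_cube)
    finally show ?thesis .
  qed
  have c: "r*(s^2-1)^2/s \<le> r*s^3 - 1"
  proof -
    have "r*(s^2-1)^2 \<le> (r*s^3 - 1) * s" using a by (simp add: algebra_simps power2_eq_square power3_eq_cube)
    thus ?thesis using sp by (simp add: divide_le_eq)
  qed
  show ?thesis using b c by simp
qed

locale scl =
  fixes V :: "'a set" and E k \<Delta> and \<beta> :: real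
  assumes G: "fin_graph V E"
    and deg: "\<And>x. x \<in> V \<Longrightarrow> card {u\<in>V. E x u} \<le> \<Delta>"
    and D1: "\<Delta> \<ge> 1" and bpos: "\<beta> > 0"
    and key: "\<beta> \<le> real k - real \<Delta> - 2 * real (\<Delta>*(\<Delta>-1)*(\<Delta>-1)) / \<beta>"
begin

definition N where "N x = {u\<in>V. E x u}"

lemma finV: "finite V" using G unfolding fin_graph_def by auto
lemma EV: "E u w \<Longrightarrow> u \<in> V \<and> w \<in> V" using G unfolding fin_graph_def by auto
lemma Esym: "E u w \<Longrightarrow> E w u" using G unfolding fin_graph_def by auto
lemma Eirr: "\<not> E u u" using G unfolding fin_graph_def by auto
lemma finN: "finite (N x)" unfolding N_def using finV by auto
lemma cardN: "card (N x) \<le> \<Delta>"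
proof (cases "x \<in> V")
  case True thus ?thesis using deg unfolding N_def by auto
next
  case False then have "N x = {}" unfolding N_def using EV by auto
  thus ?thesis by simp
qed
lemma cardN1: "y \<in> N x \<Longrightarrow> card (N x - {y}) \<le> \<Delta> - 1"
  using cardN[of x] finN[of x] by (simp add: card_Diff_singleton)
lemma cardNm: "card (N x) - Suc 0 \<le> \<Delta> - Suc 0" using cardN diff_le_mono by blast
lemma inN: "y \<in> N x \<longleftrightarrow> E x y" unfolding N_def using EV by auto


lemma sigma_bound:
  assumes "finite X" "card X \<le> D"
    and "\<And>x. x \<in> X \<Longrightarrow> finite (Y x) \<and> card (Y x) \<le> m"
    and "\<And>x y. x \<in> X \<Longrightarrow> y \<in> Y x \<Longrightarrow> finite (Z x y) \<and> card (Z x y) \<le> m"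
  shows "card (SIGMA x:X. SIGMA y:Y x. Z x y) \<le> D*m*m"
proof -
  have "card (SIGMA x:X. SIGMA y:Y x. Z x y) = (\<Sum>x\<in>X. card (SIGMA y:Y x. Z x y))"
    using assms by (intro card_SigmaI) (auto intro!: finite_SigmaI)
  also have "\<dots> = (\<Sum>x\<in>X. \<Sum>y\<in>Y x. card (Z x y))"
    using assms by (intro sum.cong refl card_SigmaI) auto
  also have "\<dots> \<le> (\<Sum>x\<in>X. \<Sum>y\<in>Y x. m)"
    using assms by (intro sum_mono) auto
  also have "\<dots> \<le> (\<Sum>x\<in>X. m*m)"
    using assms by (intro sum_mono) (auto intro: mult_right_mono)
  also have "\<dots> \<le> D*m*m" using assms by (simp add: mult_right_mono)
  finally show ?thesis .
qed

lemma step: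
  assumes S: "S \<subseteq> V" "v \<in> V" "v \<notin> S"
    and IH: "\<And>b. b \<in> S \<Longrightarrow> \<beta> * real (card (SC E k (S - {b}))) \<le> real (card (SC E k S))"
  shows "\<beta> * real (card (SC E k S)) \<le> real (card (SC E k (insert v S)))"
proof -
  have finS: "finite S" using S finV finite_subset by blast
  define C where "C = SC E k S"
  define A where "A \<phi> = {..<k} - \<phi> ` (N v \<inter> S)" for \<phi> :: "'a \<Rightarrow> nat"
  define F where "F = (\<lambda>(\<phi>::'a\<Rightarrow>nat, x::nat). \<phi>(v:=x))"
  define ext where "ext = F ` (SIGMA \<phi>:C. A \<phi>)"
  define P1 where "P1 = {(b,d,e). b \<in> S \<and> d \<in> S \<and> e \<in> S \<and> E v b \<and> E b d \<and> E d e \<and> e \<noteq> b}"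
  define P2 where "P2 = {(a,d,e). a \<in> S \<and> d \<in> S \<and> e \<in> S \<and> E a v \<and> E v d \<and> E d e \<and> a \<noteq> d \<and> e \<noteq> a}"
  define B1 where "B1 = (\<Union>(b,d,e)\<in>P1. (\<lambda>\<psi>. \<psi>(v := \<psi> d, b := \<psi> e)) ` SC E k (S - {b}))"
  define B2 where "B2 = (\<Union>(a,d,e)\<in>P2. (\<lambda>\<psi>. \<psi>(a := \<psi> d, v := \<psi> e)) ` SC E k (S - {a}))"
  have finC: "finite C" unfolding C_def using SC_finite finS by blast
  have sub: "ext \<subseteq> SC E k (insert v S) \<union> B1 \<union> B2"
  proof
    fix \<psi> assume "\<psi> \<in> ext"
    then obtain \<phi> x where \<phi>C: "\<phi> \<in> C" and xA: "x \<in> A \<phi>" and \<psi>: "\<psi> = \<phi>(v:=x)"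
      unfolding ext_def F_def by auto
    have \<phi>P: "\<phi> \<in> PiE S (\<lambda>_. {..<k})" using \<phi>C unfolding C_def SC_def by auto
    have \<phi>prop: "\<forall>u\<in>S. \<forall>w\<in>S. E u w \<longrightarrow> \<phi> u \<noteq> \<phi> w" using \<phi>C unfolding C_def SC_def by auto
    have \<phi>star: "\<forall>a\<in>S. \<forall>b\<in>S. \<forall>d\<in>S. \<forall>e\<in>S. distinct [a,b,d,e] \<and> E a b \<and> E b d \<and> E d e \<longrightarrow> \<not> (\<phi> a = \<phi> d \<and> \<phi> b = \<phi> e)"
      using \<phi>C unfolding C_def SC_def by blast
    have out: "\<psi> y = undefined" if "y \<notin> insert v S" for y
      using that \<phi>P unfolding \<psi> by (auto simp: PiE_def extensional_def)
    have onS: "\<psi> y = \<phi> y" if "y \<in> S" for y using that S unfolding \<psi> by auto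
    have rs: "restrict \<psi> (S - {b}) \<in> SC E k (S - {b})" for b
    proof -
      have "restrict \<psi> (S - {b}) = restrict \<phi> (S - {b})" using onS by (auto simp: restrict_def)
      thus ?thesis using SC_restrict[of "S - {b}" S \<phi> E k] \<phi>C unfolding C_def by auto
    qed
    have h1: "\<psi> \<in> B1" if P: "(b,d,e) \<in> P1" and c1: "\<psi> v = \<psi> d" and c2: "\<psi> b = \<psi> e" for b d e
    proof -
      let ?r = "restrict \<psi> (S - {b})"
      have bde: "b \<in> S" "d \<in> S" "e \<in> S" "e \<noteq> b" "d \<noteq> b" using P Eirr unfolding P1_def by auto
      have "\<psi> = ?r(v := ?r d, b := ?r e)"
      proof
        fix y show "\<psi> y = (?r(v := ?r d, b := ?r e)) y"
          using bde c1 c2 S out[of y] by (cases "y = b"; cases "y = v"; cases "y \<in> S") auto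
      qed
      hence "\<psi> \<in> (\<lambda>\<psi>. \<psi>(v := \<psi> d, b := \<psi> e)) ` SC E k (S - {b})" using rs by blast
      thus ?thesis unfolding B1_def using P by blast
    qed
    have h2: "\<psi> \<in> B2" if P: "(a,d,e) \<in> P2" and c1: "\<psi> a = \<psi> d" and c2: "\<psi> v = \<psi> e" for a d e
    proof -
      let ?r = "restrict \<psi> (S - {a})"
      have ade: "a \<in> S" "d \<in> S" "e \<in> S" "e \<noteq> a" "d \<noteq> a" using P unfolding P2_def by auto
      have "\<psi> = ?r(a := ?r d, v := ?r e)"
      proof
        fix y show "\<psi> y = (?r(a := ?r d, v := ?r e)) y"
          using ade c1 c2 S out[of y] by (cases "y = a"; cases "y = v"; cases "y \<in> S") auto
      qed
      hence "\<psi> \<in> (\<lambda>\<psi>. \<psi>(a := \<psi> d, v := \<psi> e)) ` SC E k (S - {a})" using rs by blast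
      thus ?thesis unfolding B2_def using P by blast
    qed
    have \<psi>P: "\<psi> \<in> PiE (insert v S) (\<lambda>_. {..<k})"
      using \<phi>P xA out unfolding \<psi> A_def by (auto simp: PiE_iff extensional_def)
    have \<psi>prop: "\<forall>u\<in>insert v S. \<forall>w\<in>insert v S. E u w \<longrightarrow> \<psi> u \<noteq> \<psi> w"
    proof (intro ballI impI)
      fix u w assume u: "u \<in> insert v S" and w: "w \<in> insert v S" and uw: "E u w"
      show "\<psi> u \<noteq> \<psi> w"
      proof (cases "u = v")
        case True
        then have "w \<in> S" "w \<in> N v" using w uw Eirr inN by auto
        then show ?thesis using True xA onS S unfolding A_def \<psi> by auto
      next
        case False
        note uS = this
        show ?thesis
        proof (cases "w = v")
          case True
          then have "u \<in> S" "u \<in> N v" using u uw Eirr inN Esym False by auto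
          then show ?thesis using True xA onS S unfolding A_def \<psi> by auto
        next
          case False
          then show ?thesis using uS u w uw \<phi>prop onS by auto
        qed
      qed
    qed
    show "\<psi> \<in> SC E k (insert v S) \<union> B1 \<union> B2"
    proof (cases "\<psi> \<in> SC E k (insert v S)")
      case True thus ?thesis by blast
    next
      case False
      then obtain a b d e where abde: "a \<in> insert v S" "b \<in> insert v S" "d \<in> insert v S" "e \<in> insert v S"
        and dis: "distinct [a,b,d,e]" and path: "E a b" "E b d" "E d e" and col: "\<psi> a = \<psi> d" "\<psi> b = \<psi> e"
        using \<psi>P \<psi>prop unfolding SC_def by blast
      consider "a = v" | "b = v" | "d = v" | "e = v" | "a \<noteq> v \<and> b \<noteq> v \<and> d \<noteq> v \<and> e \<noteq> v" by blast
      then show ?thesis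
      proof cases
        case 1
        then have "(b,d,e) \<in> P1" using abde dis path unfolding P1_def by auto
        then show ?thesis using h1 col 1 by auto
      next
        case 2
        then have "(a,d,e) \<in> P2" using abde dis path unfolding P2_def by auto
        then show ?thesis using h2 col 2 by auto
      next
        case 3
        then have "(e,b,a) \<in> P2" using abde dis path Esym unfolding P2_def by auto
        then show ?thesis using h2[of e b a] col 3 by auto
      next
        case 4
        then have "(d,b,a) \<in> P1" using abde dis path Esym unfolding P1_def by auto
        then show ?thesis using h1[of d b a] col 4 by auto
      next
        case 5
        then have "a \<in> S" "b \<in> S" "d \<in> S" "e \<in> S" using abde by auto
        then show ?thesis using \<phi>star dis path col onS by auto
      qed
    qed
  qed
  have finA: "finite (A \<phi>)" for \<phi> unfolding A_def by auto
  have injF: "inj_on F (SIGMA \<phi>:C. A \<phi>)"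
  proof (rule inj_onI)
    fix p q assume p: "p \<in> (SIGMA \<phi>:C. A \<phi>)" and q: "q \<in> (SIGMA \<phi>:C. A \<phi>)" and eq: "F p = F q"
    obtain \<phi> x where pp: "p = (\<phi>, x)" "\<phi> \<in> C" using p by auto
    obtain \<phi>' x' where qq: "q = (\<phi>', x')" "\<phi>' \<in> C" using q by auto
    have "\<phi> v = undefined" "\<phi>' v = undefined" using pp qq S unfolding C_def SC_def by (auto simp: PiE_def extensional_def)
    moreover have e2: "\<phi>(v:=x) = \<phi>'(v:=x')" using eq pp qq unfolding F_def by auto
    ultimately have "\<phi> = \<phi>'" by (metis fun_upd_triv fun_upd_upd)
    moreover have "x = x'" using e2 by (metis fun_upd_same)
    ultimately show "p = q" using pp qq by simp
  qed
  have cA: "real k - real \<Delta> \<le> real (card (A \<phi>))" for \<phi>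
  proof -
    have "card (\<phi> ` (N v \<inter> S)) \<le> card (N v \<inter> S)" using finN by (intro card_image_le) auto
    also have "\<dots> \<le> card (N v)" using finN by (intro card_mono) auto
    also have "\<dots> \<le> \<Delta>" by (rule cardN)
    finally have c1: "card (\<phi> ` (N v \<inter> S)) \<le> \<Delta>" .
    have "card {..<k} - card (\<phi> ` (N v \<inter> S)) \<le> card (A \<phi>)"
      unfolding A_def using finN by (intro diff_card_le_card_Diff) auto
    with c1 have "card {..<k} - card (\<phi> ` (N v \<inter> S)) \<le> card (A \<phi>)" "card (\<phi> ` (N v \<inter> S)) \<le> \<Delta>" by auto
    thus ?thesis by auto
  qed
  have cext: "(real k - real \<Delta>) * real (card C) \<le> real (card ext)"
  proof -
    have "card ext = (\<Sum>\<phi>\<in>C. card (A \<phi>))"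
      unfolding ext_def using injF finC finA by (simp add: card_image)
    hence "real (card ext) = (\<Sum>\<phi>\<in>C. real (card (A \<phi>)))" by simp
    moreover have "(\<Sum>\<phi>\<in>C. real k - real \<Delta>) \<le> (\<Sum>\<phi>\<in>C. real (card (A \<phi>)))"
      using cA by (intro sum_mono) auto
    ultimately show ?thesis by (simp add: mult.commute)
  qed
  have ICb: "real (card (SC E k (S - {b}))) \<le> real (card C) / \<beta>" if "b \<in> S" for b
    using IH[OF that] bpos unfolding C_def by (simp add: field_simps)
  have finP1: "finite P1" by (rule finite_subset[of _ "S \<times> S \<times> S"]) (use finS in \<open>auto simp: P1_def\<close>)
  have finP2: "finite P2" by (rule finite_subset[of _ "S \<times> S \<times> S"]) (use finS in \<open>auto simp: P2_def\<close>)
  have P1b: "card P1 \<le> \<Delta>*(\<Delta>-1)*(\<Delta>-1)"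
  proof -
    have "P1 \<subseteq> (SIGMA b:N v. SIGMA d:N b - {v}. N d - {b})"
      unfolding P1_def using inN S by auto
    hence "card P1 \<le> card (SIGMA b:N v. SIGMA d:N b - {v}. N d - {b})"
      using finN by (intro card_mono) (auto intro!: finite_SigmaI)
    also have "\<dots> \<le> \<Delta>*(\<Delta>-1)*(\<Delta>-1)"
      using finN cardN cardN1 cardNm inN Esym by (intro sigma_bound) auto
    finally show ?thesis .
  qed
  have P2b: "card P2 \<le> \<Delta>*(\<Delta>-1)*(\<Delta>-1)"
  proof -
    have "P2 \<subseteq> (SIGMA a:N v. SIGMA d:N v - {a}. N d - {v})"
      unfolding P2_def using inN S Esym by auto
    hence "card P2 \<le> card (SIGMA a:N v. SIGMA d:N v - {a}. N d - {v})"
      using finN by (intro card_mono) (auto intro!: finite_SigmaI)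
    also have "\<dots> \<le> \<Delta>*(\<Delta>-1)*(\<Delta>-1)"
      using finN cardN cardN1 cardNm inN Esym by (intro sigma_bound) auto
    finally show ?thesis .
  qed
  have cB1: "real (card B1) \<le> real (\<Delta>*(\<Delta>-1)*(\<Delta>-1)) * real (card C) / \<beta>"
  proof -
    have "card B1 \<le> (\<Sum>p\<in>P1. card ((\<lambda>(b,d,e). (\<lambda>\<psi>. \<psi>(v := \<psi> d, b := \<psi> e)) ` SC E k (S - {b})) p))"
      unfolding B1_def using finP1 by (rule card_UN_le)
    also have "\<dots> \<le> (\<Sum>p\<in>P1. card (SC E k (S - {fst p})))"
      using finS by (intro sum_mono) (auto intro!: card_image_le SC_finite)
    finally have "real (card B1) \<le> (\<Sum>p\<in>P1. real (card (SC E k (S - {fst p}))))"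
      by (metis of_nat_le_iff of_nat_sum)
    also have "\<dots> \<le> (\<Sum>p\<in>P1. real (card C) / \<beta>)"
      using ICb by (intro sum_mono) (auto simp: P1_def)
    also have "\<dots> = real (card P1) * real (card C) / \<beta>" by simp
    also have "\<dots> \<le> real (\<Delta>*(\<Delta>-1)*(\<Delta>-1)) * real (card C) / \<beta>"
      using P1b bpos by (intro divide_right_mono mult_right_mono) (simp only: of_nat_le_iff, auto)
    finally show ?thesis .
  qed
  have cB2: "real (card B2) \<le> real (\<Delta>*(\<Delta>-1)*(\<Delta>-1)) * real (card C) / \<beta>"
  proof -
    have "card B2 \<le> (\<Sum>p\<in>P2. card ((\<lambda>(a,d,e). (\<lambda>\<psi>. \<psi>(a := \<psi> d, v := \<psi> e)) ` SC E k (S - {a})) p))"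
      unfolding B2_def using finP2 by (rule card_UN_le)
    also have "\<dots> \<le> (\<Sum>p\<in>P2. card (SC E k (S - {fst p})))"
      using finS by (intro sum_mono) (auto intro!: card_image_le SC_finite)
    finally have "real (card B2) \<le> (\<Sum>p\<in>P2. real (card (SC E k (S - {fst p}))))"
      by (metis of_nat_le_iff of_nat_sum)
    also have "\<dots> \<le> (\<Sum>p\<in>P2. real (card C) / \<beta>)"
      using ICb by (intro sum_mono) (auto simp: P2_def)
    also have "\<dots> = real (card P2) * real (card C) / \<beta>" by simp
    also have "\<dots> \<le> real (\<Delta>*(\<Delta>-1)*(\<Delta>-1)) * real (card C) / \<beta>"
      using P2b bpos by (intro divide_right_mono mult_right_mono) (simp only: of_nat_le_iff, auto)
    finally show ?thesis .
  qed
  have finI: "finite (SC E k (insert v S))" using finS SC_finite by blast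
  have finB1: "finite B1" unfolding B1_def using finP1 finS by (auto intro!: finite_imageI SC_finite)
  have finB2: "finite B2" unfolding B2_def using finP2 finS by (auto intro!: finite_imageI SC_finite)
  have "card ext \<le> card (SC E k (insert v S) \<union> B1 \<union> B2)"
    using sub finI finB1 finB2 by (intro card_mono) auto
  also have "\<dots> \<le> card (SC E k (insert v S)) + card B1 + card B2"
    by (meson card_Un_le add_le_mono order_trans le_refl)
  finally have "real (card ext) \<le> real (card (SC E k (insert v S))) + real (card B1) + real (card B2)"
    by (metis of_nat_add of_nat_le_iff)
  hence main: "(real k - real \<Delta>) * real (card C) - 2 * (real (\<Delta>*(\<Delta>-1)*(\<Delta>-1)) * real (card C) / \<beta>)
      \<le> real (card (SC E k (insert v S)))" using cext cB1 cB2 by linarith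
  have "\<beta> * real (card C) \<le> (real k - real \<Delta> - 2 * real (\<Delta>*(\<Delta>-1)*(\<Delta>-1)) / \<beta>) * real (card C)"
    using key by (intro mult_right_mono) auto
  also have "\<dots> = (real k - real \<Delta>) * real (card C) - 2 * (real (\<Delta>*(\<Delta>-1)*(\<Delta>-1)) * real (card C) / \<beta>)"
    by (simp add: algebra_simps)
  finally show ?thesis using main unfolding C_def by linarith
qed


lemma stepP: "S \<subseteq> V \<Longrightarrow> v \<in> V \<Longrightarrow> v \<notin> S \<Longrightarrow> \<beta> * real (card (SC E k S)) \<le> real (card (SC E k (insert v S)))"
proof (induction "card S" arbitrary: S v rule: less_induct)
  case less
  show ?case
  proof (rule step[OF less.prems])
    fix b assume b: "b \<in> S"
    have fin: "finite S" using less.prems finV finite_subset by blast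
    have "card (S - {b}) < card S" using b fin by (metis card_Diff1_less)
    then have "\<beta> * real (card (SC E k (S - {b}))) \<le> real (card (SC E k (insert b (S - {b}))))"
      by (rule less.hyps) (use less.prems b in auto)
    moreover have "insert b (S - {b}) = S" using b by auto
    ultimately show "\<beta> * real (card (SC E k (S - {b}))) \<le> real (card (SC E k S))" by simp
  qed
qed

lemma SC_pos: "S \<subseteq> V \<Longrightarrow> card (SC E k S) > 0"
proof -
  assume SV: "S \<subseteq> V"
  have "finite S" using SV finV finite_subset by blast
  from this SV show ?thesis
  proof (induction S rule: finite_subset_induct')
    case empty
    have "(\<lambda>_. undefined) \<in> SC E k {}" unfolding SC_def by auto
    moreover have "finite (SC E k {})" by (rule SC_finite) simp
    ultimately show ?case by (auto simp: card_gt_0_iff)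
  next
    case (insert a F)
    have "F \<subseteq> V" using insert by auto
    then have "\<beta> * real (card (SC E k F)) \<le> real (card (SC E k (insert a F)))"
      using stepP insert by auto
    moreover have "\<beta> * real (card (SC E k F)) > 0" using bpos insert by simp
    ultimately show ?case by linarith
  qed
qed

lemma exists_coloring: "\<exists>c. star_coloring V E k c"
proof -
  have "card (SC E k V) > 0" using SC_pos by simp
  then obtain c where c: "c \<in> SC E k V" by (metis card_gt_0_iff ex_in_conv)
  have P: "\<forall>v\<in>V. c v < k" using c unfolding SC_def by auto
  have pr: "\<forall>u\<in>V. \<forall>w\<in>V. E u w \<longrightarrow> c u \<noteq> c w" using c unfolding SC_def by auto
  have st: "\<forall>a\<in>V. \<forall>b\<in>V. \<forall>d\<in>V. \<forall>e\<in>V. distinct [a,b,d,e] \<and> E a b \<and> E b d \<and> E d e \<longrightarrow> \<not> (c a = c d \<and> c b = c e)"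
    using c unfolding SC_def by blast
  have "star_coloring V E k c"
    unfolding star_coloring_def
  proof (intro conjI allI impI)
    show "\<forall>v\<in>V. c v < k" by (rule P)
  next
    fix u v assume "E u v" thus "c u \<noteq> c v" using pr EV by blast
  next
    fix a b d e assume h: "distinct [a, b, d, e] \<and> E a b \<and> E b d \<and> E d e"
    then have V4: "a \<in> V" "b \<in> V" "d \<in> V" "e \<in> V" using EV by auto
    have p1: "c a \<noteq> c b" "c b \<noteq> c d" "c d \<noteq> c e" using pr V4 h by auto
    have ns: "\<not> (c a = c d \<and> c b = c e)" using st V4 h by blast
    show "3 \<le> card {c a, c b, c d, c e}"
    proof (cases "c a = c d")
      case False
      then have "card {c a, c b, c d} = 3" using p1 by auto
      moreover have "card {c a, c b, c d} \<le> card {c a, c b, c d, c e}" by (intro card_mono) auto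
      ultimately show ?thesis by simp
    next
      case True
      then have "c b \<noteq> c e" using ns by auto
      then have "card {c b, c d, c e} = 3" using p1 by auto
      moreover have "card {c b, c d, c e} \<le> card {c a, c b, c d, c e}" by (intro card_mono) auto
      ultimately show ?thesis by simp
    qed
  qed
  thus ?thesis by blast
qed

end

theorem corollary11:
  fixes V :: "'a set" and E :: "'a \<Rightarrow> 'a \<Rightarrow> bool"
  assumes "fin_graph V E" and "max_degree V E \<ge> 1"
  shows "real (star_chromatic_number V E)
           \<le> 2 * sqrt 2 * real (max_degree V E) powr (3/2) + real (max_degree V E)"
proof -
  define \<Delta> where "\<Delta> = max_degree V E"
  define D where "D = real \<Delta>"
  define s where "s = sqrt D"
  define r where "r = sqrt (2::real)"
  define \<beta> where "\<beta> = r * s^3"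
  define X where "X = 2*r*s^3 + s^2"
  define k where "k = nat \<lfloor>X\<rfloor>"
  have D1: "D \<ge> 1" using assms(2) unfolding D_def \<Delta>_def by simp
  have s1: "s \<ge> 1" using D1 unfolding s_def by simp
  have s2: "s^2 = D" using D1 unfolding s_def by simp
  have pw: "D powr (3/2) = s^3"
  proof -
    have "D powr (3/2) = D powr (1 + 1/2)" by simp
    also have "\<dots> = D powr 1 * D powr (1/2)" by (rule powr_add)
    also have "\<dots> = D * sqrt D" using D1 by (simp add: powr_half_sqrt)
    also have "\<dots> = s^3" using s2 unfolding s_def by (simp add: power3_eq_cube power2_eq_square)
    finally show ?thesis .
  qed
  have bound: "2 * sqrt 2 * real (max_degree V E) powr (3/2) + real (max_degree V E) = X"
    unfolding X_def using pw s2 unfolding D_def \<Delta>_def r_def by simp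
  have X0: "X \<ge> 0" unfolding X_def r_def using s1 by simp
  have kX: "real k \<le> X" "X - 1 \<le> real k" unfolding k_def using X0 by linarith+
  have fin: "finite V" using assms(1) unfolding fin_graph_def by auto
  have deg: "card {u\<in>V. E x u} \<le> \<Delta>" if "x \<in> V" for x
  proof -
    have "degree V E x \<in> insert 0 (degree V E ` V)" using that by auto
    then have "degree V E x \<le> Max (insert 0 (degree V E ` V))" using fin by (intro Max_ge) auto
    thus ?thesis unfolding \<Delta>_def max_degree_def degree_def by simp
  qed
  have bpos: "\<beta> > 0" unfolding \<beta>_def r_def using s1 by simp
  have rD: "real (\<Delta>*(\<Delta>-1)*(\<Delta>-1)) = s^2*(s^2-1)^2"
    using assms(2) s2 unfolding D_def \<Delta>_def by (simp add: of_nat_diff power2_eq_square)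
  have "\<beta> \<le> (2*r*s^3 + s^2 - 1) - s^2 - 2*(s^2*(s^2-1)^2)/(r*s^3)"
    using arith_key[OF s1 r_def] unfolding \<beta>_def .
  also have "\<dots> \<le> real k - real \<Delta> - 2*(s^2*(s^2-1)^2)/\<beta>"
    using kX s2 unfolding \<beta>_def X_def D_def by linarith
  also have "\<dots> = real k - real \<Delta> - 2 * real (\<Delta>*(\<Delta>-1)*(\<Delta>-1)) / \<beta>"
    by (simp only: rD)
  finally have key: "\<beta> \<le> real k - real \<Delta> - 2 * real (\<Delta>*(\<Delta>-1)*(\<Delta>-1)) / \<beta>" .
  interpret scl V E k \<Delta> \<beta>
    using assms deg bpos key unfolding \<Delta>_def by unfold_locales auto
  obtain c where "star_coloring V E k c" using exists_coloring by blast
  then have "star_chromatic_number V E \<le> k"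
    unfolding star_chromatic_number_def by (intro Least_le) blast
  then have "real (star_chromatic_number V E) \<le> real k" by simp
  thus ?thesis using kX bound by simp
qed
end
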